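(* Let $\tilde{\Phi}:\mathbb{R}_{++}^{n\times m}\to\mathbb{R}$ be smooth and strictly convex, and suppose its gradient map $S:\mathbb{R}_{++}^{n\times m}\to\mathbb{R}^{n\times m}$, $S^{ij}(A)=\partial\tilde{\Phi}/\partial A_{ij}(A)$, is surjective. Let $\Phi$ be the restriction of $\tilde{\Phi}$ to $\mathcal{P}_{nm-1}$. Then for each $p\in\mathcal{P}_{n-1}$, $q\in\mathcal{P}_{m-1}$, the problem of minimizing $\Phi(P)$ over $P\in\Pi(p,q)$ has a unique solution $P^*(p,q)\in\Pi(p,q)$ (in particular the infimum of $\Phi$ over $\Pi(p,q)$ is attained at a matrix with strictly positive entries, and $P^*(p,q)$ is also the unique minimizer over the closure $\overline{\Pi(p,q)}$ of the continuous extension of $\Phi$). Moreover, a maximizer $(\alpha^*,\beta^* )\in\mathbb{R}^n\times\mathbb{R}^m$ of the dual problem $\sup_{\alpha,\beta}\{\langle p,\alpha\rangle+\langle q,\beta\rangle-\tilde{\Phi}^*(\alpha\oplus\beta)\}$ exists, and any such maximizer satisfies \[ S^{ij}(P^*(p,q))=(\alpha^* )^i+(\beta^* )^j,\qquad 1\le i\le n,\ 1\le j\le m. \]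
   Context: $\mathbb{R}_{++}^{n\times m}$ denotes the set of real $n\times m$ matrices with all entries strictly positive. $\mathcal{P}_{n-1}=\{p\in\mathbb{R}^n:\sum_i p_i=1,\ p_i>0\}$, similarly $\mathcal{P}_{m-1}$, and $\mathcal{P}_{nm-1}=\{P\in\mathbb{R}_{++}^{n\times m}:\sum_{i,j}P_{ij}=1\}$. $\Pi(p,q)=\{P\in\mathcal{P}_{nm-1}:\sum_j P_{ij}=p_i\ \forall i,\ \sum_i P_{ij}=q_j\ \forall j\}$, and $\overline{\Pi(p,q)}$ is its closure in $\mathbb{R}^{n\times m}$. The Legendre transform is $\tilde{\Phi}^*(u)=\sup_{A\in\mathbb{R}_{++}^{n\times m}}\{\langle A,u\rangle-\tilde{\Phi}(A)\}$ with $\langle A,u\rangle=\sum_{i,j}A_{ij}u^{ij}$, and $(\alpha\oplus\beta)^{ij}=\alpha^i+\beta^j$. *)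

theory Defs
  imports "HOL-Analysis.Analysis"
begin

text \<open>Matrices in R^{n x m} are represented as real^'m^'n (row index of type 'n,
column index of type 'm). The inner product on this type is the Frobenius
product sum_ij A_ij u_ij.\<close>

primrec Ck_on :: "nat \<Rightarrow> 'a::euclidean_space set \<Rightarrow> ('a \<Rightarrow> real) \<Rightarrow> bool" where
  "Ck_on 0 U f = continuous_on U f"
| "Ck_on (Suc k) U f =
     (\<exists>D :: 'a \<Rightarrow> 'a \<Rightarrow> real.
        (\<forall>x\<in>U. (f has_derivative (\<lambda>h. \<Sum>b\<in>Basis. (h \<bullet> b) * D b x)) (at x)) \<and>
        (\<forall>b\<in>Basis. Ck_on k U (D b)))"

definition smooth_on :: "'a::euclidean_space set \<Rightarrow> ('a \<Rightarrow> real) \<Rightarrow> bool" where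
  "smooth_on U f \<longleftrightarrow> (\<forall>k. Ck_on k U f)"

definition strict_convex_on :: "'a::real_vector set \<Rightarrow> ('a \<Rightarrow> real) \<Rightarrow> bool" where
  "strict_convex_on S f \<longleftrightarrow> convex S \<and>
    (\<forall>x\<in>S. \<forall>y\<in>S. \<forall>t. x \<noteq> y \<and> 0 < t \<and> t < 1 \<longrightarrow>
       f ((1 - t) *\<^sub>R x + t *\<^sub>R y) < (1 - t) * f x + t * f y)"

definition pos_mats :: "(real^'m^'n) set" where
  "pos_mats = {A. \<forall>i j. A $ i $ j > 0}"

definition prob_simplex :: "(real^'n) set" where
  "prob_simplex = {p. (\<Sum>i\<in>UNIV. p $ i) = 1 \<and> (\<forall>i. p $ i > 0)}"

definition prob_mats :: "(real^'m^'n) set" where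
  "prob_mats = {P \<in> pos_mats. (\<Sum>i\<in>UNIV. \<Sum>j\<in>UNIV. P $ i $ j) = 1}"

definition couplings :: "real^'n \<Rightarrow> real^'m \<Rightarrow> (real^'m^'n) set" where
  "couplings p q = {P \<in> prob_mats.
      (\<forall>i. (\<Sum>j\<in>UNIV. P $ i $ j) = p $ i) \<and> (\<forall>j. (\<Sum>i\<in>UNIV. P $ i $ j) = q $ j)}"

definition legendre :: "(real^'m^'n \<Rightarrow> real) \<Rightarrow> real^'m^'n \<Rightarrow> real" where
  "legendre \<Phi> u = (SUP A\<in>pos_mats. A \<bullet> u - \<Phi> A)"

definition oplus :: "real^'n \<Rightarrow> real^'m \<Rightarrow> real^'m^'n" where
  "oplus \<alpha> \<beta> = (\<chi> i j. \<alpha> $ i + \<beta> $ j)"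

definition dual_obj :: "(real^'m^'n \<Rightarrow> real) \<Rightarrow> real^'n \<Rightarrow> real^'m \<Rightarrow> real^'n \<Rightarrow> real^'m \<Rightarrow> real" where
  "dual_obj \<Phi> p q \<alpha> \<beta> = p \<bullet> \<alpha> + q \<bullet> \<beta> - legendre \<Phi> (oplus \<alpha> \<beta>)"

end

theory Submission imports Defs begin

lemma open_pos_mats: "open (pos_mats :: (real^'m::finite^'n::finite) set)"
proof -
  have eq: "pos_mats = (\<Inter>i\<in>UNIV. \<Inter>j\<in>UNIV. {A::real^'m^'n. 0 < A$i$j})"
    unfolding pos_mats_def by auto
  have "open {A::real^'m^'n. 0 < A$i$j}" for i j
    by (intro open_Collect_less continuous_intros)
  hence "open (\<Inter>i\<in>UNIV. \<Inter>j\<in>UNIV. {A::real^'m^'n. 0 < A$i$j})"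
    by (intro open_INT finite_UNIV ballI) auto
  thus ?thesis using eq by simp
qed

lemma pos_comb: "0 < (x::real) \<Longrightarrow> 0 < y \<Longrightarrow> 0 \<le> u \<Longrightarrow> 0 \<le> v \<Longrightarrow> u + v = 1 \<Longrightarrow> 0 < u * x + v * y"
proof (cases "u = 0")
  case True thus "0 < x \<Longrightarrow> 0 < y \<Longrightarrow> 0 \<le> u \<Longrightarrow> 0 \<le> v \<Longrightarrow> u + v = 1 \<Longrightarrow> 0 < u * x + v * y" by simp
next
  case False
  assume "0 < x" "0 < y" "0 \<le> u" "0 \<le> v" "u + v = 1"
  hence "0 < u * x" "0 \<le> v * y" using False by auto
  thus ?thesis by simp
qed

lemma convex_pos_mats: "convex (pos_mats :: (real^'m::finite^'n::finite) set)"
  unfolding pos_mats_def convex_def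
  by (auto intro!: pos_comb)

lemma grad_ineq:
  fixes \<Phi> :: "real^'m::finite^'n::finite \<Rightarrow> real"
  assumes strict: "strict_convex_on pos_mats \<Phi>"
    and grad: "\<forall>A\<in>pos_mats. (\<Phi> has_derivative (\<lambda>H. S A \<bullet> H)) (at A)"
    and X: "X \<in> pos_mats" and Y: "Y \<in> pos_mats"
  shows "\<Phi> X + S X \<bullet> (Y - X) \<le> \<Phi> Y"
proof -
  define f where "f t = \<Phi> (X + t *\<^sub>R (Y - X))" for t
  have d: "(f has_derivative (\<lambda>t. S X \<bullet> (t *\<^sub>R (Y - X)))) (at 0)"
  proof -
    have "((\<lambda>t::real. X + t *\<^sub>R (Y - X)) has_derivative (\<lambda>t. t *\<^sub>R (Y - X))) (at 0)"
      by (auto intro!: derivative_eq_intros)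
    moreover have "(\<Phi> has_derivative (\<lambda>H. S X \<bullet> H)) (at ((\<lambda>t::real. X + t *\<^sub>R (Y - X)) 0))"
      using grad X by simp
    ultimately show ?thesis unfolding f_def o_def[symmetric]
      by (rule diff_chain_at[unfolded o_def])
  qed
  have eqd: "(\<lambda>t. S X \<bullet> (t *\<^sub>R (Y - X))) = (\<lambda>t. (S X \<bullet> (Y - X)) * t)"
    by (rule ext) (simp only: inner_scaleR_right mult.commute)
  have "(f has_field_derivative (S X \<bullet> (Y - X))) (at 0)"
    unfolding has_field_derivative_def using d eqd by simp
  hence lim: "((\<lambda>h. (f (0 + h) - f 0) / h) \<longlongrightarrow> S X \<bullet> (Y - X)) (at 0)"
    unfolding DERIV_def .
  hence lim0: "((\<lambda>t. (f t - f 0) / t) \<longlongrightarrow> S X \<bullet> (Y - X)) (at 0)"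
    by simp
  have lim': "((\<lambda>t. (f t - f 0) / t) \<longlongrightarrow> S X \<bullet> (Y - X)) (at_right 0)"
    using lim0 filterlim_at_split by blast
  have ev: "eventually (\<lambda>t. (f t - f 0) / t \<le> \<Phi> Y - \<Phi> X) (at_right (0::real))"
    unfolding eventually_at_right_field
  proof (intro exI[of _ 1] conjI allI impI)
    fix t :: real assume t0: "0 < t" and t1: "t < 1"
    have t: "0 < t \<and> t < 1" using t0 t1 by simp
    show "(f t - f 0) / t \<le> \<Phi> Y - \<Phi> X"
    proof (cases "X = Y")
      case True then show ?thesis by (simp add: f_def)
    next
      case False
      have "\<Phi> ((1 - t) *\<^sub>R X + t *\<^sub>R Y) < (1 - t) * \<Phi> X + t * \<Phi> Y"
        using strict X Y False t unfolding strict_convex_on_def by blast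
      moreover have "(1 - t) *\<^sub>R X + t *\<^sub>R Y = X + t *\<^sub>R (Y - X)"
        by (simp add: algebra_simps)
      ultimately have "f t - f 0 \<le> t * (\<Phi> Y - \<Phi> X)" by (simp add: f_def algebra_simps)
      hence "(f t - f 0) / t \<le> (t * (\<Phi> Y - \<Phi> X)) / t"
        by (rule divide_right_mono) (use t in simp)
      thus ?thesis using t by simp
    qed
  qed simp
  have "S X \<bullet> (Y - X) \<le> \<Phi> Y - \<Phi> X"
    by (rule tendsto_upperbound[OF lim' ev]) simp
  thus ?thesis by simp
qed

lemma oplus_inner:
  fixes P :: "real^'m::finite^'n::finite"
  shows "P \<bullet> oplus a b = (\<Sum>i\<in>UNIV. a$i * (\<Sum>j\<in>UNIV. P$i$j)) + (\<Sum>j\<in>UNIV. b$j * (\<Sum>i\<in>UNIV. P$i$j))"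
proof -
  have "P \<bullet> oplus a b = (\<Sum>i\<in>UNIV. \<Sum>j\<in>UNIV. P$i$j * a$i) + (\<Sum>i\<in>UNIV. \<Sum>j\<in>UNIV. P$i$j * b$j)"
    by (simp add: inner_vec_def oplus_def distrib_left sum.distrib)
  also have "(\<Sum>i\<in>UNIV. \<Sum>j\<in>UNIV. P$i$j * a$i) = (\<Sum>i\<in>UNIV. a$i * (\<Sum>j\<in>UNIV. P$i$j))"
    by (simp add: sum_distrib_left mult.commute)
  also have "(\<Sum>i\<in>UNIV. \<Sum>j\<in>UNIV. P$i$j * b$j) = (\<Sum>j\<in>UNIV. \<Sum>i\<in>UNIV. P$i$j * b$j)"
    by (rule sum.swap)
  also have "\<dots> = (\<Sum>j\<in>UNIV. b$j * (\<Sum>i\<in>UNIV. P$i$j))"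
    by (simp add: sum_distrib_left mult.commute)
  finally show ?thesis .
qed

lemma marg_inner:
  fixes P :: "real^'m::finite^'n::finite"
  assumes "\<forall>i. (\<Sum>j\<in>UNIV. P $ i $ j) = p $ i" "\<forall>j. (\<Sum>i\<in>UNIV. P $ i $ j) = q $ j"
  shows "P \<bullet> oplus \<alpha> \<beta> = p \<bullet> \<alpha> + q \<bullet> \<beta>"
  unfolding oplus_inner using assms by (simp add: inner_vec_def mult.commute)

context
  fixes \<Phi> :: "real^'m::finite^'n::finite \<Rightarrow> real"
    and S :: "real^'m^'n \<Rightarrow> real^'m^'n"
  assumes smooth: "smooth_on pos_mats \<Phi>"
    and strict: "strict_convex_on pos_mats \<Phi>"
    and grad: "\<forall>A\<in>pos_mats. (\<Phi> has_derivative (\<lambda>H. S A \<bullet> H)) (at A)"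
    and surj: "S ` pos_mats = UNIV"
begin

abbreviation "T \<equiv> inv_into pos_mats S"

lemma maximal: "X \<in> pos_mats \<Longrightarrow> A \<in> pos_mats \<Longrightarrow> X \<bullet> S A - \<Phi> X \<le> A \<bullet> S A - \<Phi> A"
  using grad_ineq[OF strict grad, of A X] by (simp add: inner_diff_right inner_commute)

lemma unique_max:
  assumes X: "X \<in> pos_mats" and Y: "Y \<in> pos_mats"
    and mX: "\<forall>Z\<in>pos_mats. Z \<bullet> u - \<Phi> Z \<le> X \<bullet> u - \<Phi> X"
    and mY: "\<forall>Z\<in>pos_mats. Z \<bullet> u - \<Phi> Z \<le> Y \<bullet> u - \<Phi> Y"
  shows "X = Y"
proof (rule ccontr)
  assume ne: "X \<noteq> Y"
  define M where "M = (1 - 1/2) *\<^sub>R X + (1/2::real) *\<^sub>R Y"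
  have M: "M \<in> pos_mats" using convex_pos_mats X Y unfolding M_def convex_def by auto
  have sc: "\<forall>x\<in>pos_mats. \<forall>y\<in>pos_mats. \<forall>t. x \<noteq> y \<and> 0 < t \<and> t < 1 \<longrightarrow>
       \<Phi> ((1 - t) *\<^sub>R x + t *\<^sub>R y) < (1 - t) * \<Phi> x + t * \<Phi> y"
    using strict unfolding strict_convex_on_def by blast
  have "\<Phi> M < (1 - 1/2) * \<Phi> X + (1/2) * \<Phi> Y"
    unfolding M_def by (rule sc[rule_format, OF X Y]) (use ne in auto)
  hence "\<Phi> M < (\<Phi> X + \<Phi> Y) / 2" by simp
  hence h1: "2 * \<Phi> M < \<Phi> X + \<Phi> Y" by simp
  moreover have "2 * (M \<bullet> u) = X \<bullet> u + Y \<bullet> u" unfolding M_def by (simp add: inner_add_left)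
  moreover have "X \<bullet> u - \<Phi> X = Y \<bullet> u - \<Phi> Y" using mX mY X Y by force
  moreover have "M \<bullet> u - \<Phi> M \<le> X \<bullet> u - \<Phi> X" using mX M by blast
  ultimately show False by linarith
qed

lemma S_inj: "inj_on S pos_mats"
proof (rule inj_onI)
  fix X Y assume X: "X \<in> pos_mats" and Y: "Y \<in> pos_mats" and e: "S X = S Y"
  show "X = Y"
    using unique_max[OF X Y, of "S X"] maximal[OF _ X] maximal[OF _ Y] e by auto
qed

lemma T_pos: "T u \<in> pos_mats"
  using surj by (metis UNIV_I inv_into_into)

lemma S_T: "S (T u) = u"
  using surj by (metis UNIV_I f_inv_into_f)

lemma T_S: "A \<in> pos_mats \<Longrightarrow> T (S A) = A"
  using S_inj by (simp add: inv_into_f_f)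

lemma Phi_cont: "continuous_on pos_mats \<Phi>"
  using grad has_derivative_continuous continuous_at_imp_continuous_on by blast

lemma T_max0: "X \<in> pos_mats \<Longrightarrow> X \<bullet> u - \<Phi> X \<le> T u \<bullet> u - \<Phi> (T u)"
  using maximal[OF _ T_pos, of X u] by (simp add: S_T)

lemma conv_le:
  assumes X: "X \<in> pos_mats" and Y: "Y \<in> pos_mats" and s: "0 \<le> s" "s \<le> 1"
  shows "\<Phi> ((1 - s) *\<^sub>R X + s *\<^sub>R Y) \<le> (1 - s) * \<Phi> X + s * \<Phi> Y"
proof -
  consider "X = Y" | "s = 0" | "s = 1" | "X \<noteq> Y" "0 < s" "s < 1" using s by linarith
  thus ?thesis
  proof cases
    case 1
    have "(1 - s) *\<^sub>R X + s *\<^sub>R X = X" by (simp add: scaleR_add_left[symmetric])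
    thus ?thesis using 1 by (simp add: algebra_simps)
  next
    case 4
    have "\<Phi> ((1 - s) *\<^sub>R X + s *\<^sub>R Y) < (1 - s) * \<Phi> X + s * \<Phi> Y"
      using strict X Y 4 unfolding strict_convex_on_def by blast
    thus ?thesis by simp
  qed simp_all
qed

lemma T_cont: "continuous_on UNIV T"
  unfolding continuous_on_iff
proof (intro ballI allI impI)
  fix u :: "real^'m^'n" and e :: real assume e: "e > 0"
  define A where "A = T u"
  define F where "F w X = \<Phi> X - X \<bullet> w" for w X
  have Fmin: "F w (T w) \<le> F w X" if "X \<in> pos_mats" for w X
    using T_max0[OF that, of w] unfolding F_def by simp
  obtain r0 where r0: "r0 > 0" "cball A r0 \<subseteq> pos_mats"
    using open_pos_mats[unfolded open_contains_cball] T_pos[of u] unfolding A_def by blast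
  define r where "r = min (e/2) r0"
  have r: "r > 0" "r < e" using e r0 by (auto simp: r_def)
  have cb: "cball A r \<subseteq> pos_mats" using r0 by (auto simp: r_def)
  have sp: "sphere A r \<subseteq> pos_mats" using cb sphere_cball by blast
  have sne: "sphere A r \<noteq> {}" using r by simp
  have Fcont: "continuous_on (sphere A r) (F u)"
    unfolding F_def by (intro continuous_intros continuous_on_subset[OF Phi_cont sp])
  obtain X0 where X0: "X0 \<in> sphere A r" "\<forall>X\<in>sphere A r. F u X0 \<le> F u X"
    using continuous_attains_inf[OF compact_sphere sne Fcont] by blast
  define m where "m = F u X0 - F u A"
  have m: "m > 0"
  proof -
    have X0p: "X0 \<in> pos_mats" using X0 sp by blast
    have "F u A \<le> F u X0" using Fmin[OF X0p] A_def by simp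
    moreover have "F u X0 \<noteq> F u A"
    proof
      assume eq: "F u X0 = F u A"
      have "\<forall>Z\<in>pos_mats. Z \<bullet> u - \<Phi> Z \<le> X0 \<bullet> u - \<Phi> X0"
      proof
        fix Z :: "real^'m^'n" assume Z: "Z \<in> pos_mats"
        have "F u A \<le> F u Z" using Fmin[OF Z] A_def by simp
        thus "Z \<bullet> u - \<Phi> Z \<le> X0 \<bullet> u - \<Phi> X0" using eq unfolding F_def by linarith
      qed
      moreover have "\<forall>Z\<in>pos_mats. Z \<bullet> u - \<Phi> Z \<le> A \<bullet> u - \<Phi> A"
        using T_max0 A_def by blast
      ultimately have "X0 = A" using unique_max[OF X0p T_pos] A_def by blast
      thus False using X0 r by simp
    qed
    ultimately show ?thesis unfolding m_def by linarith
  qed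
  show "\<exists>d>0. \<forall>u'\<in>UNIV. dist u' u < d \<longrightarrow> dist (T u') (T u) < e"
  proof (intro exI[of _ "m / (2 * r)"] conjI ballI impI)
    show "0 < m / (2 * r)" using m r by simp
    fix u' :: "real^'m^'n" assume du: "dist u' u < m / (2 * r)"
    have key: "F u' A < F u' X" if X: "X \<in> sphere A r" for X
    proof -
      have nX: "norm (X - A) = r" using X by (simp add: dist_norm norm_minus_commute)
      have "\<bar>(X - A) \<bullet> (u' - u)\<bar> \<le> norm (X - A) * norm (u' - u)" by (rule Cauchy_Schwarz_ineq2)
      also have "\<dots> = r * dist u' u" using nX by (simp add: dist_norm)
      also have "\<dots> \<le> r * (m / (2 * r))" using du r by (intro mult_left_mono) auto
      also have "\<dots> = m / 2" using r by simp
      finally have cs: "\<bar>(X - A) \<bullet> (u' - u)\<bar> \<le> m / 2" .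
      have "F u' X - F u' A = (F u X - F u A) - (X - A) \<bullet> (u' - u)"
        unfolding F_def by (simp add: inner_diff_left inner_diff_right)
      moreover have "F u X - F u A \<ge> m" using X0 X unfolding m_def by auto
      ultimately show ?thesis using cs m by linarith
    qed
    define B where "B = T u'"
    have Bmin: "F u' B \<le> F u' A" using Fmin[of A u'] B_def A_def T_pos by auto
    have "dist B A < r"
    proof (rule ccontr)
      assume "\<not> dist B A < r"
      hence dBA: "dist B A \<ge> r" by simp
      hence dpos: "dist B A > 0" using r by linarith
      define s where "s = r / dist B A"
      have s: "0 < s" "s \<le> 1" using dBA dpos r by (auto simp: s_def)
      define X where "X = (1 - s) *\<^sub>R A + s *\<^sub>R B"
      have "X - A = s *\<^sub>R (B - A)" unfolding X_def by (simp add: algebra_simps)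
      hence "norm (X - A) = s * norm (B - A)" using s(1) by simp
      hence "dist A X = s * dist B A" by (simp add: dist_norm norm_minus_commute)
      hence XS: "X \<in> sphere A r" using dpos by (simp add: s_def)
      have Ap: "A \<in> pos_mats" using A_def T_pos by simp
      have Bp: "B \<in> pos_mats" using B_def T_pos by simp
      have "\<Phi> X \<le> (1 - s) * \<Phi> A + s * \<Phi> B" unfolding X_def using conv_le[OF Ap Bp] s by simp
      moreover have "X \<bullet> u' = (1 - s) * (A \<bullet> u') + s * (B \<bullet> u')"
        unfolding X_def by (simp add: inner_add_left)
      ultimately have "F u' X \<le> (1 - s) * F u' A + s * F u' B" unfolding F_def by (simp add: algebra_simps)
      also have "\<dots> \<le> (1 - s) * F u' A + s * F u' A" using Bmin s by (intro add_left_mono mult_left_mono) auto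
      also have "\<dots> = F u' A" by (simp add: algebra_simps)
      finally show False using key[OF XS] by simp
    qed
    thus "dist (T u') (T u) < e" using r B_def A_def by simp
  qed
qed

lemma T_max: "X \<in> pos_mats \<Longrightarrow> X \<bullet> u - \<Phi> X \<le> T u \<bullet> u - \<Phi> (T u)"
  using maximal[OF _ T_pos, of X u] by (simp add: S_T)

lemma legendre_eq: "legendre \<Phi> u = T u \<bullet> u - \<Phi> (T u)"
  unfolding legendre_def
  by (rule cSup_eq_maximum) (auto intro: T_pos T_max)

lemma legendre_ge: "X \<in> pos_mats \<Longrightarrow> X \<bullet> u - \<Phi> X \<le> legendre \<Phi> u"
  using T_max legendre_eq by simp


lemma legendre_cont: "continuous_on UNIV (legendre \<Phi>)"
proof -
  have "continuous_on UNIV (\<Phi> \<circ> T)"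
    by (rule continuous_on_compose[OF T_cont]) (auto intro: continuous_on_subset[OF Phi_cont] T_pos)
  hence "continuous_on UNIV (\<lambda>u. T u \<bullet> u - \<Phi> (T u))"
    using T_cont by (auto intro!: continuous_intros simp: o_def)
  thus ?thesis using legendre_eq by simp
qed


lemma E_inner:
  "(\<chi> k l. if k = i \<and> l = j then 1 else (0::real)) \<bullet> (w :: real^'m^'n) = w $ i $ j"
proof -
  have "(\<chi> k l. if k = i \<and> l = j then 1 else (0::real)) \<bullet> w
      = (\<Sum>k\<in>UNIV. \<Sum>l\<in>UNIV. if k = i then (if l = j then w$k$l else 0) else 0)"
    by (simp add: inner_vec_def) (intro sum.cong refl, auto)
  also have "\<dots> = (\<Sum>k\<in>UNIV. if k = i then w$k$j else 0)"
    by (intro sum.cong refl) (simp add: sum.delta)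
  also have "\<dots> = w $ i $ j" by (simp add: sum.delta)
  finally show ?thesis .
qed

lemma dual_exists:
  assumes p: "p \<in> prob_simplex" and q: "q \<in> prob_simplex"
  shows "\<exists>\<alpha> \<beta>. \<forall>\<alpha>' \<beta>'. dual_obj \<Phi> p q \<alpha>' \<beta>' \<le> dual_obj \<Phi> p q \<alpha> \<beta>"
proof -
  define g where "g \<alpha> \<beta> = dual_obj \<Phi> p q \<alpha> \<beta>" for \<alpha> \<beta>
  have pp: "\<forall>i. p$i > 0" "(\<Sum>i\<in>UNIV. p$i) = 1" using p unfolding prob_simplex_def by auto
  have qq: "\<forall>j. q$j > 0" "(\<Sum>j\<in>UNIV. q$j) = 1" using q unfolding prob_simplex_def by auto
  define P0 :: "real^'m^'n" where "P0 = (\<chi> i j. p$i * q$j)"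
  have P0r: "\<forall>i. (\<Sum>j\<in>UNIV. P0$i$j) = p$i"
    using qq by (simp add: P0_def sum_distrib_left[symmetric])
  have P0c: "\<forall>j. (\<Sum>i\<in>UNIV. P0$i$j) = q$j"
    using pp by (simp add: P0_def sum_distrib_right[symmetric])
  define E :: "'n \<Rightarrow> 'm \<Rightarrow> real^'m^'n" where "E i j = (\<chi> k l. if k = i \<and> l = j then 1 else 0)" for i j
  define \<epsilon> where "\<epsilon> i j = p$i * q$j / 2" for i j
  have \<epsilon>pos: "\<epsilon> i j > 0" for i j using pp qq by (simp add: \<epsilon>_def)
  define A where "A s i j = P0 + (s * \<epsilon> i j) *\<^sub>R E i j" for s i j
  have Apos: "A s i j \<in> pos_mats" if s: "\<bar>s\<bar> \<le> 1" for s i j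
    unfolding pos_mats_def
  proof (intro CollectI allI)
    fix k l
    have pq: "0 < p$k * q$l" using pp qq by simp
    have "\<bar>s * (p$k * q$l / 2)\<bar> = \<bar>s\<bar> * (p$k * q$l / 2)" using pp(1)[rule_format, of k] qq(1)[rule_format, of l] by (simp add: abs_mult)
    also have "\<dots> \<le> 1 * (p$k * q$l / 2)" using s pq by (intro mult_right_mono) auto
    finally have "\<bar>s * (p$k * q$l / 2)\<bar> \<le> p$k * q$l / 2" by simp
    hence "0 < p$k * q$l + s * (p$k * q$l / 2)" using pq by linarith
    thus "0 < A s i j $ k $ l" using pq by (cases "k = i \<and> l = j") (auto simp: A_def P0_def E_def \<epsilon>_def)
  qed
  have gP0: "g \<alpha> \<beta> = P0 \<bullet> oplus \<alpha> \<beta> - legendre \<Phi> (oplus \<alpha> \<beta>)" for \<alpha> \<beta>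
    unfolding g_def dual_obj_def using marg_inner[OF P0r P0c] by simp
  have gbound: "g \<alpha> \<beta> \<le> \<Phi> (A s i j) - s * \<epsilon> i j * (\<alpha>$i + \<beta>$j)" if s: "\<bar>s\<bar> \<le> 1" for s i j \<alpha> \<beta>
  proof -
    have "A s i j \<bullet> oplus \<alpha> \<beta> - \<Phi> (A s i j) \<le> legendre \<Phi> (oplus \<alpha> \<beta>)"
      by (rule legendre_ge[OF Apos[OF s]])
    moreover have "A s i j \<bullet> oplus \<alpha> \<beta> = P0 \<bullet> oplus \<alpha> \<beta> + s * \<epsilon> i j * (\<alpha>$i + \<beta>$j)"
      unfolding A_def E_def by (simp add: inner_add_left E_inner oplus_def)
    ultimately show ?thesis using gP0 by simp
  qed
  define c where "c = g 0 0"
  define R0 where "R0 i j = (\<bar>\<Phi> (A 1 i j) - c\<bar> + \<bar>\<Phi> (A (-1) i j) - c\<bar>) / \<epsilon> i j" for i j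
  have R0nn: "R0 i j \<ge> 0" for i j using \<epsilon>pos[of i j] by (simp add: R0_def)
  have bound1: "\<bar>\<alpha>$i + \<beta>$j\<bar> \<le> R0 i j" if ge: "c \<le> g \<alpha> \<beta>" for \<alpha> \<beta> i j
  proof -
    have g1: "g \<alpha> \<beta> \<le> \<Phi> (A 1 i j) - 1 * \<epsilon> i j * (\<alpha>$i + \<beta>$j)" by (rule gbound) simp
    have g2: "g \<alpha> \<beta> \<le> \<Phi> (A (-1) i j) - (-1) * \<epsilon> i j * (\<alpha>$i + \<beta>$j)" by (rule gbound) simp
    have "\<epsilon> i j * (\<alpha>$i + \<beta>$j) \<le> \<Phi> (A 1 i j) - c" using g1 ge by simp
    moreover have "- (\<epsilon> i j * (\<alpha>$i + \<beta>$j)) \<le> \<Phi> (A (-1) i j) - c" using g2 ge by simp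
    ultimately have "\<bar>\<epsilon> i j * (\<alpha>$i + \<beta>$j)\<bar> \<le> \<bar>\<Phi> (A 1 i j) - c\<bar> + \<bar>\<Phi> (A (-1) i j) - c\<bar>"
      unfolding abs_le_iff
      using abs_ge_self[of "\<Phi> (A 1 i j) - c"] abs_ge_self[of "\<Phi> (A (-1) i j) - c"]
        abs_ge_zero[of "\<Phi> (A 1 i j) - c"] abs_ge_zero[of "\<Phi> (A (-1) i j) - c"] by (intro conjI) linarith+
    moreover have "\<bar>\<epsilon> i j * (\<alpha>$i + \<beta>$j)\<bar> = \<epsilon> i j * \<bar>\<alpha>$i + \<beta>$j\<bar>"
      using \<epsilon>pos[of i j] by (simp add: abs_mult)
    ultimately have "\<epsilon> i j * \<bar>\<alpha>$i + \<beta>$j\<bar> \<le> \<bar>\<Phi> (A 1 i j) - c\<bar> + \<bar>\<Phi> (A (-1) i j) - c\<bar>"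
      by simp
    thus ?thesis using \<epsilon>pos[of i j] by (simp add: R0_def pos_le_divide_eq mult.commute)
  qed
  define R where "R = (\<Sum>i\<in>UNIV. \<Sum>j\<in>UNIV. R0 i j)"
  have R0R: "R0 i j \<le> R" for i j
  proof -
    have "R0 i j \<le> (\<Sum>j\<in>UNIV. R0 i j)" by (rule member_le_sum) (auto simp: R0nn)
    also have "\<dots> \<le> R" unfolding R_def by (rule member_le_sum) (auto intro: sum_nonneg R0nn)
    finally show ?thesis .
  qed
  have Rnn: "R \<ge> 0" using R0R[of undefined undefined] R0nn[of undefined undefined] by simp
  define j0 :: 'm where "j0 = undefined"
  define R' where "R' = real CARD('n) * R + real CARD('m) * (2 * R)"
  have R'nn: "R' \<ge> 0" using Rnn by (simp add: R'_def)
  have normb: "norm (\<alpha>, \<beta>) \<le> R'" if b: "\<forall>i j. \<bar>\<alpha>$i + \<beta>$j\<bar> \<le> R" and b0: "\<beta>$j0 = 0" for \<alpha> :: "real^'n" and \<beta> :: "real^'m"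
  proof -
    have ai: "\<bar>\<alpha>$i\<bar> \<le> R" for i using b[rule_format, of i j0] b0 by simp
    have bj: "\<bar>\<beta>$j\<bar> \<le> 2 * R" for j
    proof -
      have "\<bar>\<beta>$j\<bar> \<le> \<bar>\<alpha>$undefined + \<beta>$j\<bar> + \<bar>\<alpha>$undefined\<bar>" by linarith
      thus ?thesis using b[rule_format, of undefined j] ai[of undefined] by linarith
    qed
    have "norm \<alpha> \<le> real CARD('n) * R"
      using norm_le_l1_cart[of \<alpha>] sum_bounded_above[of "UNIV::'n set" "\<lambda>i. \<bar>\<alpha>$i\<bar>" R] ai by simp
    moreover have "norm \<beta> \<le> real CARD('m) * (2 * R)"
      using norm_le_l1_cart[of \<beta>] sum_bounded_above[of "UNIV::'m set" "\<lambda>j. \<bar>\<beta>$j\<bar>" "2*R"] bj by simp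
    ultimately show ?thesis using norm_Pair_le[of \<alpha> \<beta>] unfolding R'_def by linarith
  qed
  define G where "G x = g (fst x) (snd x)" for x :: "(real^'n) \<times> (real^'m)"
  have contG: "continuous_on UNIV G"
  proof -
    have c1: "continuous_on UNIV (\<lambda>x::(real^'n) \<times> (real^'m). oplus (fst x) (snd x))"
      unfolding oplus_def by (intro continuous_intros)
    have "continuous_on UNIV (\<lambda>x::(real^'n) \<times> (real^'m). legendre \<Phi> (oplus (fst x) (snd x)))"
      by (rule continuous_on_compose2[OF legendre_cont c1]) auto
    thus ?thesis unfolding G_def g_def dual_obj_def by (intro continuous_intros)
  qed
  obtain z where zin: "z \<in> cball 0 R'" and zmax: "\<forall>y\<in>cball 0 R'. G y \<le> G z"
  proof -
    have ne: "cball (0::(real^'n) \<times> (real^'m)) R' \<noteq> {}" using R'nn by simp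
    show ?thesis using continuous_attains_sup[OF compact_cball ne continuous_on_subset[OF contG subset_UNIV]] that
      by blast
  qed
  have "g \<alpha>' \<beta>' \<le> g (fst z) (snd z)" for \<alpha>' \<beta>'
  proof (cases "g \<alpha>' \<beta>' < c")
    case True
    have "(0, 0) \<in> cball (0::(real^'n) \<times> (real^'m)) R'" using R'nn by simp
    hence "G (0,0) \<le> G z" using zmax by blast
    thus ?thesis using True unfolding c_def G_def by simp
  next
    case False
    define c' where "c' = \<beta>'$j0"
    define \<alpha>'' where "\<alpha>'' = (\<chi> i. \<alpha>'$i + c')"
    define \<beta>'' where "\<beta>'' = (\<chi> j. \<beta>'$j - c')"
    have o: "oplus \<alpha>'' \<beta>'' = oplus \<alpha>' \<beta>'" by (simp add: vec_eq_iff oplus_def \<alpha>''_def \<beta>''_def)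
    have pa: "p \<bullet> \<alpha>'' = p \<bullet> \<alpha>' + c'"
      using pp by (simp add: inner_vec_def \<alpha>''_def distrib_left sum.distrib sum_distrib_right[symmetric])
    have qb: "q \<bullet> \<beta>'' = q \<bullet> \<beta>' - c'"
      using qq by (simp add: inner_vec_def \<beta>''_def right_diff_distrib sum_subtractf sum_distrib_right[symmetric])
    have geq: "g \<alpha>'' \<beta>'' = g \<alpha>' \<beta>'" unfolding g_def dual_obj_def o pa qb by simp
    have cg: "c \<le> g \<alpha>'' \<beta>''" using geq False by simp
    have "\<forall>i j. \<bar>\<alpha>''$i + \<beta>''$j\<bar> \<le> R"
    proof (intro allI)
      fix i j
      show "\<bar>\<alpha>''$i + \<beta>''$j\<bar> \<le> R" using bound1[OF cg, of i j] R0R[of i j] by linarith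
    qed
    moreover have "\<beta>''$j0 = 0" by (simp add: \<beta>''_def c'_def)
    ultimately have "(\<alpha>'', \<beta>'') \<in> cball 0 R'" unfolding mem_cball_0 by (rule normb)
    hence "G (\<alpha>'', \<beta>'') \<le> G z" using zmax by blast
    thus ?thesis using geq by (simp add: G_def)
  qed
  thus ?thesis unfolding g_def by blast
qed

lemma kkt_ineq:
  assumes mx: "\<forall>\<alpha>' \<beta>'. dual_obj \<Phi> p q \<alpha>' \<beta>' \<le> dual_obj \<Phi> p q \<alpha> \<beta>"
  shows "p \<bullet> a + q \<bullet> b \<le> T (oplus \<alpha> \<beta>) \<bullet> oplus a b"
proof -
  define u where "u = oplus \<alpha> \<beta>"
  define v where "v = oplus a b"
  have lin: "oplus (\<alpha> + t *\<^sub>R a) (\<beta> + t *\<^sub>R b) = u + t *\<^sub>R v" for t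
    by (simp add: vec_eq_iff oplus_def u_def v_def algebra_simps)
  have ineq: "p \<bullet> a + q \<bullet> b \<le> T (u + t *\<^sub>R v) \<bullet> v" if t: "t > 0" for t
  proof -
    define B where "B = T (u + t *\<^sub>R v)"
    have "dual_obj \<Phi> p q (\<alpha> + t *\<^sub>R a) (\<beta> + t *\<^sub>R b) \<le> dual_obj \<Phi> p q \<alpha> \<beta>" using mx by blast
    hence "p \<bullet> \<alpha> + t * (p \<bullet> a) + q \<bullet> \<beta> + t * (q \<bullet> b) - legendre \<Phi> (u + t *\<^sub>R v)
           \<le> p \<bullet> \<alpha> + q \<bullet> \<beta> - legendre \<Phi> u"
      unfolding dual_obj_def lin by (simp add: inner_add_right u_def)
    moreover have "legendre \<Phi> (u + t *\<^sub>R v) = B \<bullet> (u + t *\<^sub>R v) - \<Phi> B"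
      using legendre_eq B_def by simp
    moreover have "B \<bullet> u - \<Phi> B \<le> legendre \<Phi> u" using legendre_ge[OF T_pos] B_def by simp
    ultimately have "t * (p \<bullet> a + q \<bullet> b) \<le> t * (B \<bullet> v)"
      by (simp add: inner_add_right algebra_simps)
    thus ?thesis using t B_def by simp
  qed
  have "isCont T u" using T_cont continuous_on_eq_continuous_at open_UNIV by blast
  moreover have "((\<lambda>t::real. u + t *\<^sub>R v) \<longlongrightarrow> u) (at_right 0)"
    by (auto intro!: tendsto_eq_intros)
  ultimately have "((\<lambda>t. T (u + t *\<^sub>R v)) \<longlongrightarrow> T u) (at_right 0)"
    by (rule isCont_tendsto_compose)
  hence lim: "((\<lambda>t. T (u + t *\<^sub>R v) \<bullet> v) \<longlongrightarrow> T u \<bullet> v) (at_right 0)"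
    by (intro tendsto_intros)
  have "p \<bullet> a + q \<bullet> b \<le> T u \<bullet> v"
    by (rule tendsto_lowerbound[OF lim]) (auto simp: eventually_at_right_field intro!: exI[of _ 1] ineq)
  thus ?thesis unfolding u_def v_def .
qed


lemma sum_axis: "(\<Sum>i\<in>UNIV. axis k (c::real) $ i * f i) = c * f k"
proof -
  have "(\<Sum>i\<in>UNIV. axis k c $ i * f i) = (\<Sum>i\<in>UNIV. if k = i then c * f k else 0)"
    by (rule sum.cong) (auto simp: axis_def)
  also have "\<dots> = c * f k" by (simp add: sum.delta sum.delta')
  finally show ?thesis .
qed

lemma kkt_coupling:
  assumes p: "p \<in> prob_simplex" and q: "q \<in> prob_simplex"
    and mx: "\<forall>\<alpha>' \<beta>'. dual_obj \<Phi> p q \<alpha>' \<beta>' \<le> dual_obj \<Phi> p q \<alpha> \<beta>"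
  shows "T (oplus \<alpha> \<beta>) \<in> couplings p q"
proof -
  define A where "A = T (oplus \<alpha> \<beta>)"
  have K: "p \<bullet> a + q \<bullet> b \<le> A \<bullet> oplus a b" for a b using kkt_ineq[OF mx] A_def by simp
  have row: "(\<Sum>j\<in>UNIV. A$i$j) = p$i" for i
  proof -
    have "p$i \<le> (\<Sum>j\<in>UNIV. A$i$j)"
      using K[of "axis i 1" 0] by (simp add: oplus_inner inner_axis sum_axis)
    moreover have "- p$i \<le> - (\<Sum>j\<in>UNIV. A$i$j)"
      using K[of "axis i (-1)" 0] by (simp add: oplus_inner inner_axis sum_axis)
    ultimately show ?thesis by linarith
  qed
  have col: "(\<Sum>i\<in>UNIV. A$i$j) = q$j" for j
  proof -
    have "q$j \<le> (\<Sum>i\<in>UNIV. A$i$j)"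
      using K[of 0 "axis j 1"] by (simp add: oplus_inner inner_axis sum_axis)
    moreover have "- q$j \<le> - (\<Sum>i\<in>UNIV. A$i$j)"
      using K[of 0 "axis j (-1)"] by (simp add: oplus_inner inner_axis sum_axis)
    ultimately show ?thesis by linarith
  qed
  have "(\<Sum>i\<in>UNIV. \<Sum>j\<in>UNIV. A$i$j) = 1" using row p unfolding prob_simplex_def by simp
  thus ?thesis using row col T_pos A_def unfolding couplings_def prob_mats_def by auto
qed

lemma primal_min:
  assumes A: "A \<in> couplings p q" and SA: "S A = oplus \<alpha> \<beta>" and Q: "Q \<in> couplings p q"
  shows "\<Phi> A \<le> \<Phi> Q"
proof -
  have Apos: "A \<in> pos_mats" and Qpos: "Q \<in> pos_mats"
    using A Q unfolding couplings_def prob_mats_def by auto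
  have "A \<bullet> oplus \<alpha> \<beta> = p \<bullet> \<alpha> + q \<bullet> \<beta>" "Q \<bullet> oplus \<alpha> \<beta> = p \<bullet> \<alpha> + q \<bullet> \<beta>"
    using A Q marg_inner unfolding couplings_def by auto
  hence "S A \<bullet> (Q - A) = 0" using SA by (simp add: inner_diff_right inner_commute)
  thus ?thesis using grad_ineq[OF strict grad Apos Qpos] by simp
qed

lemma half_conv:
  assumes X: "X \<in> pos_mats" and Y: "Y \<in> pos_mats"
  shows "\<Phi> ((1/2::real) *\<^sub>R X + (1/2::real) *\<^sub>R Y) \<le> (\<Phi> X + \<Phi> Y) / 2"
proof (cases "X = Y")
  case True
  have "(1/2::real) *\<^sub>R X + (1/2::real) *\<^sub>R X = X" by (simp add: scaleR_add_left[symmetric])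
  thus ?thesis using True by simp
next
  case False
  have "\<Phi> ((1 - 1/2) *\<^sub>R X + (1/2::real) *\<^sub>R Y) < (1 - 1/2) * \<Phi> X + (1/2) * \<Phi> Y"
    using strict X Y False unfolding strict_convex_on_def by (elim conjE) (drule bspec[OF _ X], drule bspec[OF _ Y], drule spec[of _ "1/2"], simp)
  thus ?thesis by simp
qed

end

lemma couplings_conv:
  assumes P: "P \<in> couplings p q" and Q: "Q \<in> couplings p q" and t: "0 \<le> t" "t \<le> 1"
  shows "(1 - t) *\<^sub>R P + t *\<^sub>R Q \<in> couplings p q"
proof -
  have "(\<Sum>i\<in>UNIV. \<Sum>j\<in>UNIV. ((1 - t) *\<^sub>R P + t *\<^sub>R Q) $ i $ j)
      = (1 - t) * (\<Sum>i\<in>UNIV. \<Sum>j\<in>UNIV. P $ i $ j) + t * (\<Sum>i\<in>UNIV. \<Sum>j\<in>UNIV. Q $ i $ j)"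
    by (simp add: sum.distrib sum_distrib_left)
  moreover have "\<forall>i. (\<Sum>j\<in>UNIV. ((1 - t) *\<^sub>R P + t *\<^sub>R Q) $ i $ j)
      = (1 - t) * (\<Sum>j\<in>UNIV. P $ i $ j) + t * (\<Sum>j\<in>UNIV. Q $ i $ j)"
    by (simp add: sum.distrib sum_distrib_left)
  moreover have "\<forall>j. (\<Sum>i\<in>UNIV. ((1 - t) *\<^sub>R P + t *\<^sub>R Q) $ i $ j)
      = (1 - t) * (\<Sum>i\<in>UNIV. P $ i $ j) + t * (\<Sum>i\<in>UNIV. Q $ i $ j)"
    by (simp add: sum.distrib sum_distrib_left)
  moreover have "\<forall>i j. 0 < ((1 - t) *\<^sub>R P + t *\<^sub>R Q) $ i $ j"
    using P Q t unfolding couplings_def prob_mats_def pos_mats_def by (auto intro!: pos_comb)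
  ultimately show ?thesis using P Q unfolding couplings_def prob_mats_def pos_mats_def
    by (auto simp: algebra_simps)
qed

definition Cset :: "real^'n \<Rightarrow> real^'m \<Rightarrow> (real^'m^'n) set" where
  "Cset p q = {X. (\<forall>i j. 0 \<le> X$i$j) \<and> (\<forall>i. (\<Sum>j\<in>UNIV. X$i$j) = p$i) \<and> (\<forall>j. (\<Sum>i\<in>UNIV. X$i$j) = q$j)}"

lemma closure_couplings: "closure (couplings p q) \<subseteq> Cset (p::real^'n::finite) (q::real^'m::finite)"
proof (rule closure_minimal)
  show "couplings p q \<subseteq> Cset p q"
    unfolding couplings_def prob_mats_def pos_mats_def Cset_def by (auto simp: less_imp_le)
  have eq: "Cset p q = (\<Inter>i. \<Inter>j. {X. 0 \<le> X$i$j}) \<inter> (\<Inter>i. {X. (\<Sum>j\<in>UNIV. X$i$j) = p$i})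
       \<inter> (\<Inter>j. {X. (\<Sum>i\<in>UNIV. X$i$j) = q$j})"
    unfolding Cset_def by auto
  have "closed {X::real^'m^'n. 0 \<le> X$i$j}" for i j by (intro closed_Collect_le continuous_intros)
  moreover have "closed {X::real^'m^'n. (\<Sum>j\<in>UNIV. X$i$j) = p$i}" for i
    by (intro closed_Collect_eq continuous_intros)
  moreover have "closed {X::real^'m^'n. (\<Sum>i\<in>UNIV. X$i$j) = q$j}" for j
    by (intro closed_Collect_eq continuous_intros)
  ultimately show "closed (Cset p q)" unfolding eq by (intro closed_Int closed_INT) auto
qed

lemma half_in_couplings:
  assumes P: "P \<in> couplings p q" and X: "X \<in> Cset p q" and p: "p \<in> prob_simplex"
  shows "(1/2::real) *\<^sub>R P + (1/2::real) *\<^sub>R X \<in> couplings p q"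
proof -
  have Xs: "\<forall>i j. 0 \<le> X$i$j" "\<forall>i. (\<Sum>j\<in>UNIV. X$i$j) = p$i" "\<forall>j. (\<Sum>i\<in>UNIV. X$i$j) = q$j"
    using X unfolding Cset_def by auto
  have Ps: "\<forall>i j. 0 < P$i$j" "\<forall>i. (\<Sum>j\<in>UNIV. P$i$j) = p$i" "\<forall>j. (\<Sum>i\<in>UNIV. P$i$j) = q$j"
    using P unfolding couplings_def prob_mats_def pos_mats_def by auto
  have ps: "(\<Sum>i\<in>UNIV. p$i) = 1" using p unfolding prob_simplex_def by auto
  have pos: "\<forall>i j. 0 < ((1/2::real) *\<^sub>R P + (1/2::real) *\<^sub>R X) $ i $ j"
  proof (intro allI)
    fix i j
    have "0 < P$i$j" "0 \<le> X$i$j" using Xs Ps by auto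
    thus "0 < ((1/2::real) *\<^sub>R P + (1/2::real) *\<^sub>R X) $ i $ j" by simp
  qed
  have r: "\<forall>i. (\<Sum>j\<in>UNIV. ((1/2::real) *\<^sub>R P + (1/2::real) *\<^sub>R X) $ i $ j) = p$i"
    using Xs Ps by (simp add: sum.distrib sum_divide_distrib[symmetric])
  have c: "\<forall>j. (\<Sum>i\<in>UNIV. ((1/2::real) *\<^sub>R P + (1/2::real) *\<^sub>R X) $ i $ j) = q$j"
    using Xs Ps by (simp add: sum.distrib sum_divide_distrib[symmetric])
  show ?thesis using pos r c ps unfolding couplings_def prob_mats_def pos_mats_def by auto
qed


theorem theorem1:
  fixes \<Phi> :: "real^'m::finite^'n::finite \<Rightarrow> real"
    and S :: "real^'m^'n \<Rightarrow> real^'m^'n"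
    and p :: "real^'n" and q :: "real^'m"
  assumes smooth: "smooth_on pos_mats \<Phi>"
    and strict: "strict_convex_on pos_mats \<Phi>"
    and grad: "\<forall>A\<in>pos_mats. (\<Phi> has_derivative (\<lambda>H. S A \<bullet> H)) (at A)"
    and surj: "S ` pos_mats = UNIV"
    and p: "p \<in> prob_simplex" and q: "q \<in> prob_simplex"
  shows "\<exists>P. P \<in> couplings p q \<and> (\<forall>Q\<in>couplings p q. \<Phi> P \<le> \<Phi> Q)
          \<and> (\<forall>P'\<in>couplings p q. (\<forall>Q\<in>couplings p q. \<Phi> P' \<le> \<Phi> Q) \<longrightarrow> P' = P)
          \<and> (\<forall>\<Psi>. continuous_on (closure (couplings p q)) \<Psi>
                 \<and> (\<forall>Q\<in>couplings p q. \<Psi> Q = \<Phi> Q) \<longrightarrow>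
                 (\<forall>Q\<in>closure (couplings p q). \<Psi> P \<le> \<Psi> Q)
                 \<and> (\<forall>P'\<in>closure (couplings p q).
                      (\<forall>Q\<in>closure (couplings p q). \<Psi> P' \<le> \<Psi> Q) \<longrightarrow> P' = P))
          \<and> (\<exists>\<alpha> \<beta>. \<forall>\<alpha>' \<beta>'. dual_obj \<Phi> p q \<alpha>' \<beta>' \<le> dual_obj \<Phi> p q \<alpha> \<beta>)
          \<and> (\<forall>\<alpha> \<beta>. (\<forall>\<alpha>' \<beta>'. dual_obj \<Phi> p q \<alpha>' \<beta>' \<le> dual_obj \<Phi> p q \<alpha> \<beta>) \<longrightarrow>
                 (\<forall>i j. S P $ i $ j = \<alpha> $ i + \<beta> $ j))"
proof -
  note ctx = smooth strict grad surj
  obtain \<alpha>0 \<beta>0 where mx: "\<forall>\<alpha>' \<beta>'. dual_obj \<Phi> p q \<alpha>' \<beta>' \<le> dual_obj \<Phi> p q \<alpha>0 \<beta>0"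
    using dual_exists[OF ctx p q] by blast
  define P where "P = inv_into pos_mats S (oplus \<alpha>0 \<beta>0)"
  have Pc: "P \<in> couplings p q" using kkt_coupling[OF ctx p q mx] P_def by simp
  have Ppos: "P \<in> pos_mats" using Pc unfolding couplings_def prob_mats_def by auto
  have SP: "S P = oplus \<alpha>0 \<beta>0" using S_T[OF ctx] P_def by simp
  have Pmin: "\<forall>Q\<in>couplings p q. \<Phi> P \<le> \<Phi> Q" using primal_min[OF ctx Pc SP] by blast
  have uniq: "\<forall>P'\<in>couplings p q. (\<forall>Q\<in>couplings p q. \<Phi> P' \<le> \<Phi> Q) \<longrightarrow> P' = P"
  proof (intro ballI impI)
    fix P' assume P': "P' \<in> couplings p q" and m: "\<forall>Q\<in>couplings p q. \<Phi> P' \<le> \<Phi> Q"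
    show "P' = P"
    proof (rule ccontr)
      assume ne: "P' \<noteq> P"
      have P'pos: "P' \<in> pos_mats" using P' unfolding couplings_def prob_mats_def by auto
      define M where "M = (1 - 1/2) *\<^sub>R P' + (1/2::real) *\<^sub>R P"
      have Mc: "M \<in> couplings p q" unfolding M_def by (rule couplings_conv[OF P' Pc]) auto
      have "\<Phi> M < (1 - 1/2) * \<Phi> P' + (1/2) * \<Phi> P"
        using strict P'pos Ppos ne unfolding strict_convex_on_def M_def
        by (elim conjE) (drule bspec[OF _ P'pos], drule bspec[OF _ Ppos], drule spec[of _ "1/2"], simp)
      moreover have "\<Phi> P' \<le> \<Phi> P" using m Pc by blast
      moreover have "\<Phi> P \<le> \<Phi> M" using Pmin Mc by blast
      ultimately show False by simp
    qed
  qed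
  have psi: "(\<forall>Q\<in>closure (couplings p q). \<Psi> P \<le> \<Psi> Q)
                 \<and> (\<forall>P'\<in>closure (couplings p q).
                      (\<forall>Q\<in>closure (couplings p q). \<Psi> P' \<le> \<Psi> Q) \<longrightarrow> P' = P)"
    if cont: "continuous_on (closure (couplings p q)) \<Psi>" and agree: "\<forall>Q\<in>couplings p q. \<Psi> Q = \<Phi> Q"
    for \<Psi>
  proof -
    have PinC: "P \<in> closure (couplings p q)" using Pc closure_subset by blast
    have lim: "((\<lambda>n. \<Psi> (x n)) \<longlongrightarrow> \<Psi> l) sequentially"
      if "\<forall>n. x n \<in> couplings p q" "(x \<longlongrightarrow> l) sequentially" "l \<in> closure (couplings p q)" for x l
    proof (rule continuous_on_tendsto_compose[OF cont])
      have "\<forall>n. x n \<in> closure (couplings p q)" using that(1) closure_subset by blast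
      thus "\<forall>\<^sub>F n in sequentially. x n \<in> closure (couplings p q)" by (rule always_eventually)
    qed (use that in auto)
    have A1: "\<forall>Q\<in>closure (couplings p q). \<Psi> P \<le> \<Psi> Q"
    proof
      fix Q assume Q: "Q \<in> closure (couplings p q)"
      then obtain x where x: "\<forall>n. x n \<in> couplings p q" "(x \<longlongrightarrow> Q) sequentially"
        unfolding closure_sequential by blast
      show "\<Psi> P \<le> \<Psi> Q"
        by (rule tendsto_lowerbound[OF lim[OF x Q]]) (use x agree Pmin Pc in auto)
    qed
    have A2: "P' = P" if P': "P' \<in> closure (couplings p q)"
      and m: "\<forall>Q\<in>closure (couplings p q). \<Psi> P' \<le> \<Psi> Q" for P'
    proof -
      obtain x where x: "\<forall>n. x n \<in> couplings p q" "(x \<longlongrightarrow> P') sequentially"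
        using P' unfolding closure_sequential by blast
      define M where "M = (1/2::real) *\<^sub>R P + (1/2::real) *\<^sub>R P'"
      have P'C: "P' \<in> Cset p q" using P' closure_couplings by blast
      have Mc: "M \<in> couplings p q" unfolding M_def by (rule half_in_couplings[OF Pc P'C p])
      have Mn: "\<forall>n. (1/2::real) *\<^sub>R P + (1/2::real) *\<^sub>R x n \<in> couplings p q"
      proof
        fix n
        have "x n \<in> closure (couplings p q)" using x(1) closure_subset by blast
        hence "x n \<in> Cset p q" using closure_couplings[of p q] by blast
        thus "(1/2::real) *\<^sub>R P + (1/2::real) *\<^sub>R x n \<in> couplings p q" by (rule half_in_couplings[OF Pc _ p])
      qed
      have Mlim: "((\<lambda>n. (1/2::real) *\<^sub>R P + (1/2::real) *\<^sub>R x n) \<longlongrightarrow> M) sequentially"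
        unfolding M_def by (intro tendsto_intros x(2))
      have L1: "((\<lambda>n. \<Psi> ((1/2::real) *\<^sub>R P + (1/2::real) *\<^sub>R x n)) \<longlongrightarrow> \<Psi> M) sequentially"
        by (rule lim[OF Mn Mlim]) (use Mc closure_subset in blast)
      have L2: "((\<lambda>n. (\<Psi> P + \<Psi> (x n)) / 2) \<longlongrightarrow> (\<Psi> P + \<Psi> P') / 2) sequentially"
        by (intro tendsto_intros lim[OF x P']) simp_all
      have xpos: "x n \<in> pos_mats" for n using x(1) unfolding couplings_def prob_mats_def by auto
      have "\<Psi> M \<le> (\<Psi> P + \<Psi> P') / 2"
      proof (rule tendsto_le[OF _ L2 L1])
        show "\<forall>\<^sub>F n in sequentially. \<Psi> ((1/2::real) *\<^sub>R P + (1/2::real) *\<^sub>R x n) \<le> (\<Psi> P + \<Psi> (x n)) / 2"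
          using half_conv[OF ctx Ppos xpos] agree Mn x(1) Pc by (auto intro!: always_eventually)
      qed simp
      moreover have "\<Psi> P' \<le> \<Psi> P" using m PinC by blast
      ultimately have "\<Phi> M \<le> \<Phi> P" using agree Mc Pc by simp
      hence "\<forall>Q\<in>couplings p q. \<Phi> M \<le> \<Phi> Q"
      proof (intro ballI)
        fix Q assume "\<Phi> M \<le> \<Phi> P" and Q: "Q \<in> couplings p q"
        thus "\<Phi> M \<le> \<Phi> Q" using Pmin[rule_format, OF Q] by linarith
      qed
      hence "M = P" using uniq Mc by blast
      hence "2 *\<^sub>R M - P = P" by (simp add: scaleR_2)
      moreover have "2 *\<^sub>R M - P = P'" unfolding M_def by (simp add: scaleR_add_right)
      ultimately show ?thesis by simp
    qed
    show ?thesis using A1 A2 by blast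
  qed
  have dual: "\<forall>i j. S P $ i $ j = \<alpha> $ i + \<beta> $ j"
    if m: "\<forall>\<alpha>' \<beta>'. dual_obj \<Phi> p q \<alpha>' \<beta>' \<le> dual_obj \<Phi> p q \<alpha> \<beta>" for \<alpha> \<beta>
  proof -
    define w where "w = oplus \<alpha> \<beta>"
    have marg: "\<forall>i. (\<Sum>j\<in>UNIV. P $ i $ j) = p $ i" "\<forall>j. (\<Sum>i\<in>UNIV. P $ i $ j) = q $ j"
      using Pc unfolding couplings_def by auto
    have "dual_obj \<Phi> p q \<alpha>0 \<beta>0 = \<Phi> P"
      unfolding dual_obj_def legendre_eq[OF ctx] P_def[symmetric]
      using marg_inner[OF marg, of \<alpha>0 \<beta>0] SP P_def by simp
    hence "\<Phi> P \<le> dual_obj \<Phi> p q \<alpha> \<beta>" using m[rule_format, of \<alpha>0 \<beta>0] by linarith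
    hence le: "legendre \<Phi> w \<le> P \<bullet> w - \<Phi> P"
      unfolding dual_obj_def w_def using marg_inner[OF marg, of \<alpha> \<beta>] by simp
    have "\<forall>Z\<in>pos_mats. Z \<bullet> w - \<Phi> Z \<le> P \<bullet> w - \<Phi> P"
    proof
      fix Z :: "real^'m^'n" assume Z: "Z \<in> pos_mats"
      show "Z \<bullet> w - \<Phi> Z \<le> P \<bullet> w - \<Phi> P" using legendre_ge[OF ctx Z, of w] le by linarith
    qed
    moreover have "\<forall>Z\<in>pos_mats. Z \<bullet> w - \<Phi> Z \<le> inv_into pos_mats S w \<bullet> w - \<Phi> (inv_into pos_mats S w)"
      using T_max[OF ctx] by blast
    ultimately have "P = inv_into pos_mats S w"
      by (rule unique_max[OF ctx Ppos T_pos[OF ctx]])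
    hence "S P = w" using S_T[OF ctx] by simp
    thus ?thesis unfolding w_def oplus_def by simp
  qed
  have D1: "\<exists>\<alpha> \<beta>. \<forall>\<alpha>' \<beta>'. dual_obj \<Phi> p q \<alpha>' \<beta>' \<le> dual_obj \<Phi> p q \<alpha> \<beta>"
    by (rule dual_exists[OF ctx p q])
  have psi': "\<forall>\<Psi>. continuous_on (closure (couplings p q)) \<Psi>
                 \<and> (\<forall>Q\<in>couplings p q. \<Psi> Q = \<Phi> Q) \<longrightarrow>
                 (\<forall>Q\<in>closure (couplings p q). \<Psi> P \<le> \<Psi> Q)
                 \<and> (\<forall>P'\<in>closure (couplings p q).
                      (\<forall>Q\<in>closure (couplings p q). \<Psi> P' \<le> \<Psi> Q) \<longrightarrow> P' = P)"
    by (intro allI impI, elim conjE, rule psi)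
  have dual': "\<forall>\<alpha> \<beta>. (\<forall>\<alpha>' \<beta>'. dual_obj \<Phi> p q \<alpha>' \<beta>' \<le> dual_obj \<Phi> p q \<alpha> \<beta>) \<longrightarrow>
                 (\<forall>i j. S P $ i $ j = \<alpha> $ i + \<beta> $ j)"
    by (intro allI impI, rule dual[THEN spec, THEN spec])
  show ?thesis
    apply (rule exI[of _ P])
    apply (intro conjI)
         apply (rule Pc)
        apply (rule Pmin)
       apply (rule uniq)
      apply (rule psi')
     apply (rule D1)
    apply (rule dual')
    done
qed

end
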